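(* In the setting described in the context (with $L=[0,1]$), let $q\in\{1,\dots,n\}$ and assume there exists $A\subseteq\mathcal C$ with $|A|=q$ and $\eta_q(A)=1$. Define $\mu^*:2^{\mathcal C}\to[0,1]$ by $\mu^*(\emptyset)=0$, $\mu^*(X)=\eta_q(X)$ if $0<|X|\le q$, and $\mu^*(X)=\max_{\emptyset\neq Y\subsetneq X,\ |Y|\le q}\eta_q(Y)$ if $|X|>q$. Then $\mu^*$ is a $q$-maxitive capacity and $\max_{1\le k\le N}|S_{\mu^*}(x^{(k)})-\alpha^{(k)}|=\Delta_q$.
   Context: Let $\mathcal C=\{1,\dots,n\}$ and $L=[0,1]$. A capacity is a map $\mu:2^{\mathcal C}\to[0,1]$ with $\mu(\emptyset)=0$, $\mu(\mathcal C)=1$, monotone for inclusion; it is $q$-maxitive if for all $X$ with $|X|>q$, $\mu(X)=\max_{Y\subsetneq X,\ |Y|\le q}\mu(Y)$. Sugeno integral: $S_\mu(x)=\max_{A\subseteq\mathcal C}\min(\min_{i\in A}x_i,\mu(A))$ with $\min_{i\in\emptyset}x_i=1$. Training data: $N$ pairs $(x^{(k)},\alpha^{(k)})$, $x^{(k)}\in[0,1]^n$, $\alpha^{(k)}\in[0,1]$. For nonempty $A$, $m_{k,A}=\min_{i\in A}x^{(k)}_i$. Write $t^+=\max(t,0)$. For $1\le i\le N$ and $0<|A|\le q$, let $\sigma_G(\alpha^{(i)},m_{l,A},\alpha^{(l)})=\min\big(\tfrac{(\alpha^{(i)}-\alpha^{(l)})^+}{2},(m_{l,A}-\alpha^{(l)})^+\big)$,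 $\delta_{i,A}=\max\big((\alpha^{(i)}-m_{i,A})^+,\max_{1\le l\le N}\sigma_G(\alpha^{(i)},m_{l,A},\alpha^{(l)})\big)$, $\delta_i=\min_{0<|A|\le q}\delta_{i,A}$, and $\Delta_q=\max_{1\le i\le N}\delta_i$. For $0<|A|\le q$, $\eta_q(A)=\min_{1\le k\le N}\big(m_{k,A}\to_G\min(\alpha^{(k)}+\Delta_q,1)\big)$, where $a\to_G b=1$ if $a\le b$ and $a\to_G b=b$ otherwise. *)

theory Defs
  imports Complex_Main
begin

text \<open>Criteria set C = {1..n}; capacities are functions on sets of naturals,
  only their values on subsets of {1..n} matter.\<close>

definition crit :: "nat \<Rightarrow> nat set" where
  "crit n = {1..n}"

definition pos :: "real \<Rightarrow> real" where
  "pos t = max t 0"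

definition capacity :: "nat \<Rightarrow> (nat set \<Rightarrow> real) \<Rightarrow> bool" where
  "capacity n \<mu> \<longleftrightarrow>
     \<mu> {} = 0 \<and> \<mu> (crit n) = 1 \<and>
     (\<forall>X. X \<subseteq> crit n \<longrightarrow> 0 \<le> \<mu> X \<and> \<mu> X \<le> 1) \<and>
     (\<forall>X Y. X \<subseteq> Y \<longrightarrow> Y \<subseteq> crit n \<longrightarrow> \<mu> X \<le> \<mu> Y)"

definition q_maxitive :: "nat \<Rightarrow> nat \<Rightarrow> (nat set \<Rightarrow> real) \<Rightarrow> bool" where
  "q_maxitive n q \<mu> \<longleftrightarrow>
     (\<forall>X. X \<subseteq> crit n \<longrightarrow> card X > q \<longrightarrow>
        \<mu> X = Max {\<mu> Y | Y. Y \<subset> X \<and> card Y \<le> q})"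

definition minx :: "(nat \<Rightarrow> real) \<Rightarrow> nat set \<Rightarrow> real" where
  "minx x A = (if A = {} then 1 else Min (x ` A))"

definition sugeno :: "nat \<Rightarrow> (nat set \<Rightarrow> real) \<Rightarrow> (nat \<Rightarrow> real) \<Rightarrow> real" where
  "sugeno n \<mu> x = Max {min (minx x A) (\<mu> A) | A. A \<subseteq> crit n}"

text \<open>Training data: x k i is the i-th component of x^(k), alpha k is alpha^(k), k in {1..N}.\<close>

definition mkA :: "(nat \<Rightarrow> nat \<Rightarrow> real) \<Rightarrow> nat \<Rightarrow> nat set \<Rightarrow> real" where
  "mkA x k A = Min (x k ` A)"

definition sigmaG :: "real \<Rightarrow> real \<Rightarrow> real \<Rightarrow> real" where
  "sigmaG ai m al = min (pos (ai - al) / 2) (pos (m - al))"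

definition deltaA :: "nat \<Rightarrow> (nat \<Rightarrow> nat \<Rightarrow> real) \<Rightarrow> (nat \<Rightarrow> real) \<Rightarrow> nat \<Rightarrow> nat set \<Rightarrow> real" where
  "deltaA N x alpha i A =
     max (pos (alpha i - mkA x i A))
         (Max ((\<lambda>l. sigmaG (alpha i) (mkA x l A) (alpha l)) ` {1..N}))"

definition qsets :: "nat \<Rightarrow> nat \<Rightarrow> nat set set" where
  "qsets n q = {A. A \<subseteq> crit n \<and> 0 < card A \<and> card A \<le> q}"

definition delta :: "nat \<Rightarrow> nat \<Rightarrow> nat \<Rightarrow> (nat \<Rightarrow> nat \<Rightarrow> real) \<Rightarrow> (nat \<Rightarrow> real) \<Rightarrow> nat \<Rightarrow> real" where
  "delta n q N x alpha i = Min (deltaA N x alpha i ` qsets n q)"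

definition Delta :: "nat \<Rightarrow> nat \<Rightarrow> nat \<Rightarrow> (nat \<Rightarrow> nat \<Rightarrow> real) \<Rightarrow> (nat \<Rightarrow> real) \<Rightarrow> real" where
  "Delta n q N x alpha = Max (delta n q N x alpha ` {1..N})"

definition impG :: "real \<Rightarrow> real \<Rightarrow> real" where
  "impG a b = (if a \<le> b then 1 else b)"

definition eta :: "nat \<Rightarrow> nat \<Rightarrow> nat \<Rightarrow> (nat \<Rightarrow> nat \<Rightarrow> real) \<Rightarrow> (nat \<Rightarrow> real) \<Rightarrow> nat set \<Rightarrow> real" where
  "eta n q N x alpha A =
     Min ((\<lambda>k. impG (mkA x k A) (min (alpha k + Delta n q N x alpha) 1)) ` {1..N})"

definition mustar :: "nat \<Rightarrow> nat \<Rightarrow> nat \<Rightarrow> (nat \<Rightarrow> nat \<Rightarrow> real) \<Rightarrow> (nat \<Rightarrow> real) \<Rightarrow> nat set \<Rightarrow> real" where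
  "mustar n q N x alpha X =
     (if X = {} then 0
      else if card X \<le> q then eta n q N x alpha X
      else Max {eta n q N x alpha Y | Y. Y \<noteq> {} \<and> Y \<subset> X \<and> card Y \<le> q})"

end

theory Submission
  imports Defs
begin

locale setting =
  fixes n q N :: nat and x :: "nat \<Rightarrow> nat \<Rightarrow> real" and alpha :: "nat \<Rightarrow> real"
  assumes N1: "1 \<le> N"
    and xr: "\<And>k i. k \<in> {1..N} \<Longrightarrow> i \<in> crit n \<Longrightarrow> 0 \<le> x k i \<and> x k i \<le> 1"
    and ar: "\<And>k. k \<in> {1..N} \<Longrightarrow> 0 \<le> alpha k \<and> alpha k \<le> 1"
    and q1: "1 \<le> q" and qn: "q \<le> n"
    and exA: "\<exists>A. A \<subseteq> crit n \<and> card A = q \<and> eta n q N x alpha A = 1"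
begin

abbreviation "D \<equiv> Delta n q N x alpha"
abbreviation "et \<equiv> eta n q N x alpha"
abbreviation "mu \<equiv> mustar n q N x alpha"

lemma fin_crit: "finite (crit n)" "card (crit n) = n"
  by (auto simp: crit_def)

lemma qsets_ne1: "{1} \<in> qsets n q"
  using q1 qn by (auto simp: qsets_def crit_def)

lemma qsets_ne: "qsets n q \<noteq> {}"
  using qsets_ne1 by blast

lemma qsets_fin: "finite (qsets n q)"
proof -
  have "qsets n q \<subseteq> Pow (crit n)" by (auto simp: qsets_def)
  then show ?thesis using fin_crit by (meson finite_Pow_iff finite_subset)
qed

lemma qsets_D: "B \<in> qsets n q \<Longrightarrow> B \<subseteq> crit n \<and> B \<noteq> {} \<and> card B \<le> q \<and> finite B"
  using fin_crit by (auto simp: qsets_def intro: finite_subset)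

lemma deltaA_nonneg: "0 \<le> deltaA N x alpha i A"
  by (simp add: deltaA_def pos_def)

lemma delta_nonneg: "0 \<le> delta n q N x alpha i"
  unfolding delta_def using qsets_ne qsets_fin deltaA_nonneg
  by (simp add: Min_ge_iff)

lemma D_nonneg: "0 \<le> D"
proof -
  have "delta n q N x alpha 1 \<le> D" unfolding Delta_def using N1 by (intro Max_ge) auto
  then show ?thesis using delta_nonneg[of 1] by linarith
qed

lemma delta_le_D: "i \<in> {1..N} \<Longrightarrow> delta n q N x alpha i \<le> D"
  unfolding Delta_def by (intro Max_ge) auto

lemma D_attained: "\<exists>i\<in>{1..N}. D = delta n q N x alpha i"
proof -
  have "D \<in> delta n q N x alpha ` {1..N}" unfolding Delta_def using N1 by (intro Max_in) auto
  then show ?thesis by auto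
qed

lemma delta_attained: "\<exists>A\<in>qsets n q. delta n q N x alpha i = deltaA N x alpha i A"
proof -
  have "delta n q N x alpha i \<in> deltaA N x alpha i ` qsets n q" unfolding delta_def
    using qsets_ne qsets_fin by (intro Min_in) auto
  then show ?thesis by auto
qed

lemma eta_le: "k \<in> {1..N} \<Longrightarrow> et A \<le> impG (mkA x k A) (min (alpha k + D) 1)"
  unfolding eta_def by (intro Min_le) auto

lemma eta_attained: "\<exists>l\<in>{1..N}. et A = impG (mkA x l A) (min (alpha l + D) 1)"
proof -
  have "et A \<in> (\<lambda>k. impG (mkA x k A) (min (alpha k + D) 1)) ` {1..N}" unfolding eta_def
    using N1 by (intro Min_in) auto
  then show ?thesis by auto
qed

lemma eta_range: "0 \<le> et A \<and> et A \<le> 1"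
proof -
  obtain l where l: "l \<in> {1..N}" "et A = impG (mkA x l A) (min (alpha l + D) 1)"
    using eta_attained by blast
  then show ?thesis using ar[OF l(1)] D_nonneg by (auto simp: impG_def)
qed

lemma mkA_anti: "A \<noteq> {} \<Longrightarrow> A \<subseteq> B \<Longrightarrow> finite B \<Longrightarrow> mkA x k B \<le> mkA x k A"
  unfolding mkA_def by (intro Min_antimono) auto

lemma impG_anti: "a' \<le> a \<Longrightarrow> b \<le> 1 \<Longrightarrow> impG a b \<le> impG a' b"
  by (auto simp: impG_def)

lemma eta_mono: assumes "A \<noteq> {}" "A \<subseteq> B" "finite B" shows "et A \<le> et B"
proof -
  have "\<forall>k\<in>{1..N}. et A \<le> impG (mkA x k B) (min (alpha k + D) 1)"
  proof
    fix k assume k: "k \<in> {1..N}"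
    have "et A \<le> impG (mkA x k A) (min (alpha k + D) 1)" by (rule eta_le[OF k])
    also have "\<dots> \<le> impG (mkA x k B) (min (alpha k + D) 1)"
      by (rule impG_anti[OF mkA_anti[OF assms]]) simp
    finally show "et A \<le> impG (mkA x k B) (min (alpha k + D) 1)" .
  qed
  then show ?thesis unfolding eta_def[of n q N x alpha B] using N1
    by (subst Min_ge_iff) auto
qed

definition "BS X = {Y. Y \<noteq> {} \<and> Y \<subset> X \<and> card Y \<le> q}"

lemma BS_fin: "finite X \<Longrightarrow> finite (BS X)"
proof -
  assume "finite X"
  moreover have "BS X \<subseteq> Pow X" by (auto simp: BS_def)
  ultimately show ?thesis by (meson finite_Pow_iff finite_subset)
qed

lemma BS_ne: assumes "q < card X" shows "\<exists>a. {a} \<in> BS X"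
proof -
  have fX: "finite X" using assms card.infinite by fastforce
  have "X \<noteq> {}" using assms by auto
  then obtain a where a: "a \<in> X" by blast
  have "{a} \<noteq> X" using assms q1 by auto
  then show ?thesis using a q1 by (intro exI[of _ a]) (auto simp: BS_def)
qed

lemma mu_big: assumes "q < card X" shows "mu X = Max (et ` BS X)"
proof -
  have "X \<noteq> {}" using assms by auto
  moreover have "{et Y | Y. Y \<noteq> {} \<and> Y \<subset> X \<and> card Y \<le> q} = et ` BS X"
    by (auto simp: BS_def)
  ultimately show ?thesis using assms unfolding mustar_def by auto
qed

lemma mu_big_attained: assumes "q < card X" shows "\<exists>Y\<in>BS X. mu X = et Y"
proof -
  have fX: "finite X" using assms card.infinite by fastforce
  have "Max (et ` BS X) \<in> et ` BS X" using BS_fin[OF fX] BS_ne[OF assms] by (intro Max_in) auto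
  then show ?thesis using mu_big[OF assms] by auto
qed

lemma mu_small: "X \<noteq> {} \<Longrightarrow> card X \<le> q \<Longrightarrow> mu X = et X"
  unfolding mustar_def by auto

lemma mu_empty: "mu {} = 0"
  unfolding mustar_def by auto

lemma mu_range: "0 \<le> mu X \<and> mu X \<le> 1"
proof (cases "X = {}")
  case True then show ?thesis by (simp add: mu_empty)
next
  case False
  show ?thesis
  proof (cases "card X \<le> q")
    case True then show ?thesis using False mu_small eta_range by simp
  next
    case c: False
    then obtain Y where "mu X = et Y" using mu_big_attained by force
    then show ?thesis using eta_range by simp
  qed
qed

lemma mu_mono: assumes "X \<subseteq> Y" "Y \<subseteq> crit n" shows "mu X \<le> mu Y"
proof -
  have fY: "finite Y" using assms fin_crit finite_subset by blast
  show ?thesis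
  proof (cases "X = {}")
    case True then show ?thesis using mu_empty mu_range by simp
  next
    case Xne: False
    show ?thesis
    proof (cases "card X \<le> q")
      case cX: True
      show ?thesis
      proof (cases "card Y \<le> q")
        case True
        have "Y \<noteq> {}" using Xne assms(1) by blast
        then show ?thesis using mu_small[OF Xne cX] mu_small[of Y] True eta_mono[OF Xne assms(1) fY]
          by auto
      next
        case False
        then have "X \<in> BS Y" using Xne cX assms by (auto simp: BS_def)
        then have "et X \<le> Max (et ` BS Y)" using BS_fin[OF fY] by auto
        then show ?thesis using mu_big[of Y] False mu_small[OF Xne cX] by auto
      qed
    next
      case False
      then have cY: "q < card Y" using card_mono[OF fY assms(1)] by auto
      have "BS X \<subseteq> BS Y" using assms(1) by (auto simp: BS_def)
      moreover obtain a where "{a} \<in> BS X" using BS_ne False by force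
      ultimately have "Max (et ` BS X) \<le> Max (et ` BS Y)"
        using BS_fin[OF fY] by (intro Max_mono) auto
      then show ?thesis using mu_big[OF cY] mu_big False by auto
    qed
  qed
qed

lemma mu_top: "mu (crit n) = 1"
proof -
  obtain A where A: "A \<subseteq> crit n" "card A = q" "et A = 1" using exA by blast
  show ?thesis
  proof (cases "q = n")
    case True
    then have "A = crit n" using A fin_crit card_subset_eq by metis
    moreover have "crit n \<noteq> {}" using fin_crit q1 True by auto
    ultimately show ?thesis using mu_small[of "crit n"] A True fin_crit by simp
  next
    case False
    then have c: "q < card (crit n)" using qn fin_crit by simp
    have "A \<in> BS (crit n)" using A False fin_crit q1 by (auto simp: BS_def)
    then have "1 \<le> Max (et ` BS (crit n))" using A BS_fin[OF fin_crit(1)]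
      by (metis Max_ge finite_imageI image_eqI)
    moreover have "Max (et ` BS (crit n)) \<le> 1" using mu_big[OF c] mu_range by metis
    ultimately show ?thesis using mu_big[OF c] by simp
  qed
qed

lemma is_capacity: "capacity n mu"
  unfolding capacity_def using mu_empty mu_top mu_range mu_mono by blast

lemma is_qmax: "q_maxitive n q mu"
  unfolding q_maxitive_def
proof (intro allI impI)
  fix X assume X: "X \<subseteq> crit n" "q < card X"
  have fX: "finite X" using X card.infinite by fastforce
  have eq: "{mu Y | Y. Y \<subset> X \<and> card Y \<le> q} = insert 0 (et ` BS X)"
  proof (intro equalityI subsetI)
    fix v assume "v \<in> {mu Y | Y. Y \<subset> X \<and> card Y \<le> q}"
    then obtain Y where Y: "v = mu Y" "Y \<subset> X" "card Y \<le> q" by blast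
    show "v \<in> insert 0 (et ` BS X)"
    proof (cases "Y = {}")
      case True then show ?thesis using Y mu_empty by simp
    next
      case False then show ?thesis using Y mu_small by (auto simp: BS_def)
    qed
  next
    fix v assume "v \<in> insert 0 (et ` BS X)"
    then show "v \<in> {mu Y | Y. Y \<subset> X \<and> card Y \<le> q}"
    proof
      assume "v = 0"
      moreover have "{} \<subset> X" using X by auto
      ultimately show ?thesis using mu_empty by force
    next
      assume "v \<in> et ` BS X"
      then obtain Y where Y: "Y \<in> BS X" "v = et Y" by blast
      then have "v = mu Y" "Y \<subset> X" "card Y \<le> q" using mu_small by (auto simp: BS_def)
      then show ?thesis by blast
    qed
  qed
  obtain a where a: "{a} \<in> BS X" using BS_ne X by force
  have ne: "et ` BS X \<noteq> {}" using a by blast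
  have "0 \<le> et {a}" using eta_range by simp
  then have "0 \<le> Max (et ` BS X)" using a BS_fin[OF fX] by (meson Max_ge finite_imageI image_eqI order_trans)
  then have "Max (insert 0 (et ` BS X)) = Max (et ` BS X)"
    using BS_fin[OF fX] ne by (simp add: Max_insert)
  then show "mu X = Max {mu Y | Y. Y \<subset> X \<and> card Y \<le> q}" using eq mu_big[OF X(2)] by simp
qed

lemma sug_eq: "sugeno n mu f = Max ((\<lambda>A. min (minx f A) (mu A)) ` Pow (crit n))"
proof -
  have "{min (minx f A) (mu A) | A. A \<subseteq> crit n} = (\<lambda>A. min (minx f A) (mu A)) ` Pow (crit n)"
    by auto
  then show ?thesis unfolding sugeno_def by simp
qed

lemma sug_ge: "A \<subseteq> crit n \<Longrightarrow> min (minx f A) (mu A) \<le> sugeno n mu f"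
  unfolding sug_eq using fin_crit by (intro Max_ge) auto

lemma sug_att: "\<exists>A\<subseteq>crit n. sugeno n mu f = min (minx f A) (mu A)"
proof -
  have "sugeno n mu f \<in> (\<lambda>A. min (minx f A) (mu A)) ` Pow (crit n)"
    unfolding sug_eq using fin_crit by (intro Max_in) auto
  then show ?thesis by auto
qed

lemma minx_mkA: "A \<noteq> {} \<Longrightarrow> minx (x k) A = mkA x k A"
  by (simp add: minx_def mkA_def)

lemma mkA_nonneg: assumes "k \<in> {1..N}" "B \<in> qsets n q" shows "0 \<le> mkA x k B"
proof -
  have B: "B \<subseteq> crit n" "B \<noteq> {}" "finite B" using qsets_D[OF assms(2)] by auto
  show ?thesis unfolding mkA_def using B xr[OF assms(1)] by (subst Min_ge_iff) auto
qed

lemma red: assumes A: "A \<subseteq> crit n" and k: "k \<in> {1..N}"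
  shows "\<exists>B\<in>qsets n q. min (minx (x k) A) (mu A) \<le> min (mkA x k B) (et B)"
proof (cases "A = {}")
  case True
  have "0 \<le> min (mkA x k {1}) (et {1})" using mkA_nonneg[OF k qsets_ne1] eta_range by simp
  then show ?thesis using True mu_empty qsets_ne1 by (intro bexI[of _ "{1}"]) (auto simp: minx_def)
next
  case Ane: False
  have fA: "finite A" using A fin_crit finite_subset by blast
  show ?thesis
  proof (cases "card A \<le> q")
    case True
    then have "A \<in> qsets n q" using Ane A fA by (auto simp: qsets_def card_gt_0_iff)
    then show ?thesis using mu_small[OF Ane True] minx_mkA[OF Ane] by (intro bexI[of _ A]) auto
  next
    case False
    then obtain Y where Y: "Y \<in> BS A" "mu A = et Y" using mu_big_attained by force
    then have Y2: "Y \<noteq> {}" "Y \<subseteq> A" "card Y \<le> q" by (auto simp: BS_def)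
    then have "Y \<in> qsets n q" using A fA finite_subset by (auto simp: qsets_def card_gt_0_iff)
    moreover have "mkA x k A \<le> mkA x k Y" using mkA_anti[OF Y2(1,2) fA] .
    ultimately show ?thesis using Y minx_mkA[OF Ane] by (intro bexI[of _ Y]) auto
  qed
qed

lemma S_qatt: assumes k: "k \<in> {1..N}"
  shows "\<exists>B\<in>qsets n q. sugeno n mu (x k) \<le> min (mkA x k B) (et B)"
proof -
  obtain A where "A \<subseteq> crit n" "sugeno n mu (x k) = min (minx (x k) A) (mu A)" using sug_att by blast
  then show ?thesis using red[OF _ k] by metis
qed

lemma S_ge_q: assumes "B \<in> qsets n q" shows "min (mkA x k B) (et B) \<le> sugeno n mu (x k)"
proof -
  have B: "B \<subseteq> crit n" "B \<noteq> {}" "card B \<le> q" using qsets_D[OF assms] by auto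
  show ?thesis using sug_ge[OF B(1), of "x k"] mu_small[OF B(2,3)] minx_mkA[OF B(2)] by simp
qed

lemma S_upper: assumes k: "k \<in> {1..N}" shows "sugeno n mu (x k) \<le> alpha k + D"
proof -
  obtain B where B: "B \<in> qsets n q" "sugeno n mu (x k) \<le> min (mkA x k B) (et B)"
    using S_qatt[OF k] by blast
  have "et B \<le> impG (mkA x k B) (min (alpha k + D) 1)" using eta_le[OF k] .
  then have "min (mkA x k B) (et B) \<le> alpha k + D" by (auto simp: impG_def split: if_splits)
  then show ?thesis using B by linarith
qed

lemma S_lower: assumes k: "k \<in> {1..N}" shows "alpha k - D \<le> sugeno n mu (x k)"
proof -
  obtain A where A: "A \<in> qsets n q" "delta n q N x alpha k = deltaA N x alpha k A"
    using delta_attained by blast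
  have dA: "deltaA N x alpha k A \<le> D" using A delta_le_D[OF k] by simp
  have fin: "finite ((\<lambda>l. sigmaG (alpha k) (mkA x l A) (alpha l)) ` {1..N})" by simp
  have p1: "pos (alpha k - mkA x k A) \<le> D" using dA unfolding deltaA_def by simp
  have sg: "sigmaG (alpha k) (mkA x l A) (alpha l) \<le> D" if l: "l \<in> {1..N}" for l
  proof -
    have "sigmaG (alpha k) (mkA x l A) (alpha l) \<le> Max ((\<lambda>l. sigmaG (alpha k) (mkA x l A) (alpha l)) ` {1..N})"
      using l fin by (intro Max_ge) auto
    then show ?thesis using dA unfolding deltaA_def by simp
  qed
  obtain l where l: "l \<in> {1..N}" "et A = impG (mkA x l A) (min (alpha l + D) 1)"
    using eta_attained by blast
  have "alpha k - D \<le> et A"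
  proof (cases "mkA x l A \<le> min (alpha l + D) 1")
    case True
    then show ?thesis using l ar[OF k] D_nonneg by (simp add: impG_def)
  next
    case False
    then have e: "et A = min (alpha l + D) 1" using l unfolding impG_def by presburger
    show ?thesis
    proof (cases "alpha l + D \<le> 1")
      case False then show ?thesis using e ar[OF k] D_nonneg by simp
    next
      case True
      then have "D < pos (mkA x l A - alpha l)" using False by (auto simp: pos_def)
      then have "pos (alpha k - alpha l) / 2 \<le> D" using sg[OF l(1)] unfolding sigmaG_def by linarith
      then show ?thesis using e True by (simp add: pos_def)
    qed
  qed
  moreover have "alpha k - D \<le> mkA x k A" using p1 by (simp add: pos_def)
  ultimately show ?thesis using S_ge_q[OF A(1), of k] by linarith
qed

lemma err_le: "k \<in> {1..N} \<Longrightarrow> \<bar>sugeno n mu (x k) - alpha k\<bar> \<le> D"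
  using S_upper S_lower by force

lemma delta_le_eps:
  assumes e: "\<And>l. l \<in> {1..N} \<Longrightarrow> \<bar>sugeno n mu (x l) - alpha l\<bar> \<le> eps" and e0: "0 \<le> eps"
    and i: "i \<in> {1..N}"
  shows "delta n q N x alpha i \<le> eps"
proof -
  obtain A where A: "A \<in> qsets n q" "sugeno n mu (x i) \<le> min (mkA x i A) (et A)"
    using S_qatt[OF i] by blast
  have Si: "alpha i - eps \<le> sugeno n mu (x i)" using e[OF i] by linarith
  have p1: "pos (alpha i - mkA x i A) \<le> eps" using A Si e0 by (simp add: pos_def)
  have sg: "sigmaG (alpha i) (mkA x l A) (alpha l) \<le> eps" if l: "l \<in> {1..N}" for l
  proof -
    have "min (mkA x l A) (et A) \<le> alpha l + eps" using S_ge_q[OF A(1), of l] e[OF l] by linarith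
    moreover have "alpha i - eps \<le> et A" using A Si by linarith
    ultimately have "mkA x l A \<le> alpha l + eps \<or> alpha i - eps \<le> alpha l + eps" by linarith
    then show ?thesis unfolding sigmaG_def pos_def using e0
      by (smt (verit, best) field_sum_of_halves)
  qed
  have "deltaA N x alpha i A \<le> eps" unfolding deltaA_def using p1 sg N1
    by (simp add: Max_le_iff)
  moreover have "delta n q N x alpha i \<le> deltaA N x alpha i A" unfolding delta_def
    using A qsets_fin by (intro Min_le) auto
  ultimately show ?thesis by linarith
qed

lemma main_eq: "Max ((\<lambda>k. \<bar>sugeno n mu (x k) - alpha k\<bar>) ` {1..N}) = D"
proof -
  let ?E = "Max ((\<lambda>k. \<bar>sugeno n mu (x k) - alpha k\<bar>) ` {1..N})"
  have le: "?E \<le> D" using err_le N1 by (simp add: Max_le_iff)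
  have eE: "\<And>l. l \<in> {1..N} \<Longrightarrow> \<bar>sugeno n mu (x l) - alpha l\<bar> \<le> ?E" by (intro Max_ge) auto
  have "\<bar>sugeno n mu (x 1) - alpha 1\<bar> \<le> ?E" using eE[of 1] N1 by simp
  then have e0: "0 \<le> ?E" by linarith
  obtain i where i: "i \<in> {1..N}" "D = delta n q N x alpha i" using D_attained by blast
  have "D \<le> ?E" using delta_le_eps[OF eE e0 i(1)] i(2) by simp
  then show ?thesis using le by linarith
qed

end

theorem proposition3:
  fixes n q N :: nat and x :: "nat \<Rightarrow> nat \<Rightarrow> real" and alpha :: "nat \<Rightarrow> real"
  assumes "1 \<le> N"
    and "\<And>k i. k \<in> {1..N} \<Longrightarrow> i \<in> crit n \<Longrightarrow> 0 \<le> x k i \<and> x k i \<le> 1"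
    and "\<And>k. k \<in> {1..N} \<Longrightarrow> 0 \<le> alpha k \<and> alpha k \<le> 1"
    and "1 \<le> q" and "q \<le> n"
    and "\<exists>A. A \<subseteq> crit n \<and> card A = q \<and> eta n q N x alpha A = 1"
  shows "capacity n (mustar n q N x alpha) \<and> q_maxitive n q (mustar n q N x alpha) \<and>
    Max ((\<lambda>k. \<bar>sugeno n (mustar n q N x alpha) (x k) - alpha k\<bar>) ` {1..N})
      = Delta n q N x alpha"
proof -
  interpret setting n q N x alpha using assms by unfold_locales
  show ?thesis using is_capacity is_qmax main_eq by blast
qed

end
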